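(* Let $E$ be a real Banach space and let $\mu$ be a regular Borel probability measure on the compact space $(B_{E^{**}},w^* )$. Define $f_\mu:E^*\to\mathbb R_+$ by $f_\mu(x^* )=\int_{B_{E^{**}}}|x^*(\cdot)|\,d\mu$, where $x^*(x^{**})$ means $x^{**}(x^* )$. Then $f_\mu\in H_0[E]_+$ and $\|f_\mu\|_{FBL[E]}\le 1$.
   Context: For a real Banach space $E$ with dual $E^*$ and closed unit ball $B_E$, let $H[E]$ be the vector space of all positively homogeneous functions $f:E^*\to\mathbb R$ ($f(\lambda x^* )=\lambda f(x^* )$ for $\lambda>0$). For $f\in H[E]$ put $\|f\|_{FBL[E]}:=\sup\{\sum_{k=1}^n|f(x_k^* )| : n\in\mathbb N,\ x_1^*,\dots,x_n^*\in E^*,\ \sup_{x\in B_E}\sum_{k=1}^n|x_k^*(x)|\le 1\}$. $H_0[E]:=\{f\in H[E]:\|f\|_{FBL[E]}<\infty\}$, a Banach lattice with this norm and pointwise order; $H_0[E]_+$ is its positive cone. *)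

theory Defs
  imports "HOL-Probability.Probability"
begin

text \<open>The weak* topology on the closed unit ball of the bidual E** = (E* =>L real) =>L real:
  the weakest topology making all evaluations x** |-> x**(x*) continuous, i.e. the
  pullback of the product topology on (E* => real) along x** |-> blinfun_apply x**,
  restricted to the closed unit ball.\<close>
definition wstar_ball :: "(('a::real_normed_vector \<Rightarrow>\<^sub>L real) \<Rightarrow>\<^sub>L real) topology" where
  "wstar_ball = pullback_topology (cball 0 1) blinfun_apply
      (euclidean :: (('a \<Rightarrow>\<^sub>L real) \<Rightarrow> real) topology)"

definition borel_prob_on :: "'b topology \<Rightarrow> 'b measure \<Rightarrow> bool" where
  "borel_prob_on X M \<longleftrightarrow> prob_space M \<and> space M = topspace X \<and>
     sets M = sigma_sets (topspace X) {U. openin X U}"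

definition regular_on :: "'b topology \<Rightarrow> 'b measure \<Rightarrow> bool" where
  "regular_on X M \<longleftrightarrow> (\<forall>A\<in>sets M.
      emeasure M A = (SUP K\<in>{K. compactin X K \<and> K \<subseteq> A}. emeasure M K) \<and>
      emeasure M A = (INF U\<in>{U. openin X U \<and> A \<subseteq> U}. emeasure M U))"

definition pos_homog :: "(('a::real_normed_vector \<Rightarrow>\<^sub>L real) \<Rightarrow> real) \<Rightarrow> bool" where
  "pos_homog f \<longleftrightarrow> (\<forall>x' (c::real). c > 0 \<longrightarrow> f (c *\<^sub>R x') = c * f x')"

text \<open>The FBL[E] norm (as an extended real; the supremum may be infinite).
  The condition sup over x in B_E of sum_k |x_k*(x)| <= 1 is written out pointwise.\<close>
definition fbl_norm :: "(('a::real_normed_vector \<Rightarrow>\<^sub>L real) \<Rightarrow> real) \<Rightarrow> ereal" where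
  "fbl_norm f = (SUP p\<in>{(n, xs::nat \<Rightarrow> ('a \<Rightarrow>\<^sub>L real)). \<forall>x. norm x \<le> 1 \<longrightarrow>
                         (\<Sum>k<n. \<bar>blinfun_apply (xs k) x\<bar>) \<le> 1}.
                   ereal (\<Sum>k<fst p. \<bar>f (snd p k)\<bar>))"

definition H0 :: "(('a::real_normed_vector \<Rightarrow>\<^sub>L real) \<Rightarrow> real) set" where
  "H0 = {f. pos_homog f \<and> fbl_norm f < \<infinity>}"

definition H0_pos :: "(('a::real_normed_vector \<Rightarrow>\<^sub>L real) \<Rightarrow> real) set" where
  "H0_pos = {f\<in>H0. \<forall>x'. 0 \<le> f x'}"

end

theory Submission imports Defs begin

lemma sum_abs_scale:
  fixes xs :: "nat \<Rightarrow> ('a::real_normed_vector \<Rightarrow>\<^sub>L real)"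
  assumes H: "\<forall>x. norm x \<le> 1 \<longrightarrow> (\<Sum>k<n. \<bar>blinfun_apply (xs k) x\<bar>) \<le> 1"
  shows "(\<Sum>k<n. \<bar>blinfun_apply (xs k) x\<bar>) \<le> norm x"
proof (cases "x = 0")
  case True then show ?thesis by simp
next
  case False
  define u where "u = (1 / norm x) *\<^sub>R x"
  have nu: "norm u \<le> 1" using False by (simp add: u_def)
  have x: "x = norm x *\<^sub>R u" using False by (simp add: u_def)
  have "(\<Sum>k<n. \<bar>blinfun_apply (xs k) x\<bar>) = norm x * (\<Sum>k<n. \<bar>blinfun_apply (xs k) u\<bar>)"
    by (subst x) (simp add: blinfun.scaleR_right abs_mult sum_distrib_left)
  also have "\<dots> \<le> norm x * 1" using H nu by (intro mult_left_mono) auto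
  finally show ?thesis by simp
qed

lemma bidual_sum_bound:
  fixes xs :: "nat \<Rightarrow> ('a::real_normed_vector \<Rightarrow>\<^sub>L real)"
    and z :: "('a \<Rightarrow>\<^sub>L real) \<Rightarrow>\<^sub>L real"
  assumes H: "\<forall>x. norm x \<le> 1 \<longrightarrow> (\<Sum>k<n. \<bar>blinfun_apply (xs k) x\<bar>) \<le> 1"
    and nz: "norm z \<le> 1"
  shows "(\<Sum>k<n. \<bar>blinfun_apply z (xs k)\<bar>) \<le> 1"
proof -
  define s where "s k = sgn (blinfun_apply z (xs k))" for k
  define y where "y = (\<Sum>k<n. s k *\<^sub>R xs k)"
  have zy: "blinfun_apply z y = (\<Sum>k<n. \<bar>blinfun_apply z (xs k)\<bar>)"
    unfolding y_def s_def by (simp add: blinfun.sum_right blinfun.scaleR_right sgn_mult_abs abs_sgn mult.commute)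
  have ny: "norm y \<le> 1"
  proof (rule norm_blinfun_bound)
    fix x
    have "norm (blinfun_apply y x) = \<bar>\<Sum>k<n. s k * blinfun_apply (xs k) x\<bar>"
      unfolding y_def by (simp add: blinfun.sum_left blinfun.scaleR_left)
    also have "\<dots> \<le> (\<Sum>k<n. \<bar>s k * blinfun_apply (xs k) x\<bar>)" by (rule sum_abs)
    also have "\<dots> \<le> (\<Sum>k<n. \<bar>blinfun_apply (xs k) x\<bar>)"
      by (intro sum_mono) (auto simp: s_def abs_mult abs_sgn_eq)
    also have "\<dots> \<le> norm x" by (rule sum_abs_scale[OF H])
    finally show "norm (blinfun_apply y x) \<le> 1 * norm x" by simp
  qed simp
  have "\<bar>blinfun_apply z y\<bar> \<le> norm z * norm y" using norm_blinfun[of z y] by simp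
  also have "\<dots> \<le> 1" using nz ny by (simp add: mult_le_one)
  finally show ?thesis using zy by simp
qed

theorem proposition2p11:
  fixes \<mu> :: "(('a::banach \<Rightarrow>\<^sub>L real) \<Rightarrow>\<^sub>L real) measure"
    and f :: "('a \<Rightarrow>\<^sub>L real) \<Rightarrow> real"
  assumes "borel_prob_on wstar_ball \<mu>"
    and "regular_on wstar_ball \<mu>"
    and "f = (\<lambda>x'. \<integral>x''. \<bar>blinfun_apply x'' x'\<bar> \<partial>\<mu>)"
  shows "f \<in> H0_pos \<and> fbl_norm f \<le> 1"
proof -
  have P: "prob_space \<mu>" and sp: "space \<mu> = topspace wstar_ball"
    and st: "sets \<mu> = sigma_sets (topspace wstar_ball) {U. openin wstar_ball U}"
    using assms(1) unfolding borel_prob_on_def by auto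
  interpret prob_space \<mu> by (rule P)
  have top: "topspace wstar_ball = cball 0 1"
    unfolding wstar_ball_def by (simp add: topspace_pullback_topology)
  have meas: "(\<lambda>x''. \<bar>blinfun_apply x'' x'\<bar>) \<in> borel_measurable \<mu>" for x'
  proof (rule borel_measurableI)
    fix S :: "real set" assume S: "open S"
    define V where "V = (\<lambda>g::('a \<Rightarrow>\<^sub>L real) \<Rightarrow> real. \<bar>g x'\<bar>) -` S"
    have "continuous_on UNIV (\<lambda>g::('a \<Rightarrow>\<^sub>L real) \<Rightarrow> real. \<bar>g x'\<bar>)"
      by (intro continuous_intros continuous_on_product_coordinates)
    then have oV: "open V" unfolding V_def using S by (simp add: open_vimage)
    have "openin wstar_ball ((\<lambda>x''. \<bar>blinfun_apply x'' x'\<bar>) -` S \<inter> space \<mu>)"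
      unfolding sp top unfolding wstar_ball_def openin_pullback_topology
      by (rule exI[of _ V], rule conjI, simp add: oV, auto simp: V_def)
    then show "(\<lambda>x''. \<bar>blinfun_apply x'' x'\<bar>) -` S \<inter> space \<mu> \<in> sets \<mu>"
      unfolding st by (auto intro: sigma_sets.Basic)
  qed
  have bnd: "x'' \<in> space \<mu> \<Longrightarrow> norm x'' \<le> 1" for x'' using sp top by auto
  have intg: "integrable \<mu> (\<lambda>x''. \<bar>blinfun_apply x'' x'\<bar>)" for x'
  proof (rule integrable_const_bound[where B="norm x'"])
    show "AE x'' in \<mu>. norm \<bar>blinfun_apply x'' x'\<bar> \<le> norm x'"
    proof (rule AE_I2)
      fix x'' assume "x'' \<in> space \<mu>"
      then have "norm x'' \<le> 1" by (rule bnd)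
      then have "norm x'' * norm x' \<le> norm x'" by (simp add: mult_left_le_one_le)
      then show "norm \<bar>blinfun_apply x'' x'\<bar> \<le> norm x'"
        using norm_blinfun[of x'' x'] by simp
    qed
  qed (rule meas)
  have ph: "pos_homog f"
    unfolding pos_homog_def assms(3)
    by (auto simp: blinfun.scaleR_right abs_mult)
  have nn: "\<forall>x'. 0 \<le> f x'" unfolding assms(3) by auto
  have fb: "fbl_norm f \<le> 1"
    unfolding fbl_norm_def
  proof (rule SUP_least, clarsimp)
    fix n and xs :: "nat \<Rightarrow> ('a \<Rightarrow>\<^sub>L real)"
    assume H: "\<forall>x. norm x \<le> 1 \<longrightarrow> (\<Sum>k<n. \<bar>blinfun_apply (xs k) x\<bar>) \<le> 1"
    have "(\<Sum>k<n. \<bar>f (xs k)\<bar>) = (\<Sum>k<n. f (xs k))" using nn by simp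
    also have "\<dots> = (\<integral>x''. (\<Sum>k<n. \<bar>blinfun_apply x'' (xs k)\<bar>) \<partial>\<mu>)"
      unfolding assms(3) by (simp add: integral_sum intg)
    also have "\<dots> \<le> (\<integral>x''. 1 \<partial>\<mu>)"
      by (rule integral_mono) (auto intro: intg bidual_sum_bound[OF H] bnd)
    also have "\<dots> = 1" by (simp add: prob_space)
    finally show "(\<Sum>k<n. \<bar>f (xs k)\<bar>) \<le> 1" .
  qed
  then have "fbl_norm f < \<infinity>" by (auto simp: le_less_trans)
  then show ?thesis using fb ph nn unfolding H0_pos_def H0_def by auto
qed

end
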